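(* Let $A$ and $B$ be $2\times 2$ matrices with strictly positive entries. Then \[ R(AB)\le \Phi\bigl(R(A),R(B)\bigr)=\left(\frac{1+\sqrt{R(A)R(B)}}{\sqrt{R(A)}+\sqrt{R(B)}}\right)^{2}. \]
   Context: For a $2\times2$ matrix $A=(a_{ij})$ with strictly positive entries, the oriented distortion is $F(A)=\frac{a_{11}a_{22}}{a_{12}a_{21}}$ and the distortion is $R(A)=\max\{F(A),1/F(A)\}$ (so $R(A)\ge 1$). The envelope function is $\Phi(\alpha,\beta)=\left(\frac{1+\sqrt{\alpha\beta}}{\sqrt{\alpha}+\sqrt{\beta}}\right)^2$ for $\alpha,\beta\ge 1$. *)

theory Defs
  imports "HOL-Analysis.Analysis"
begin

definition pos_matrix :: "real^2^2 \<Rightarrow> bool" where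
  "pos_matrix A \<longleftrightarrow> (\<forall>i j. A $ i $ j > 0)"

definition oriented_distortion :: "real^2^2 \<Rightarrow> real" where
  "oriented_distortion A = (A $ 1 $ 1 * A $ 2 $ 2) / (A $ 1 $ 2 * A $ 2 $ 1)"

definition distortion :: "real^2^2 \<Rightarrow> real" where
  "distortion A = max (oriented_distortion A) (1 / oriented_distortion A)"

definition envelope :: "real \<Rightarrow> real \<Rightarrow> real" where
  "envelope \<alpha> \<beta> = ((1 + sqrt (\<alpha> * \<beta>)) / (sqrt \<alpha> + sqrt \<beta>))\<^sup>2"

end

theory Submission
  imports Defs
begin

definition gfun :: "real \<Rightarrow> real \<Rightarrow> real \<Rightarrow> real" where
  "gfun x y t = (1+t)*(1+x*y*t)/((1+y*t)*(1+x*t))"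

lemma key_poly:
  fixes a b t :: real
  assumes "a \<ge> 1" "b \<ge> 1" "t > 0"
  shows "(a+b)^2*((1+t)*(1+a^2*b^2*t)) \<le> (1+a*b)^2*((1+b^2*t)*(1+a^2*t))"
proof -
  have "(1+a*b)^2*((1+b^2*t)*(1+a^2*t)) - (a+b)^2*((1+t)*(1+a^2*b^2*t))
        = (a^2-1)*(b^2-1)*(1-a*b*t)^2"
    by (simp add: algebra_simps power2_eq_square)
  moreover have "(a^2-1)*(b^2-1)*(1-a*b*t)^2 \<ge> 0"
    using assms by (simp add: one_le_power)
  ultimately show ?thesis by linarith
qed

lemma key:
  fixes x y t :: real
  assumes "x \<ge> 1" "y \<ge> 1" "t > 0"
  shows "gfun x y t \<le> envelope x y" "1 \<le> gfun x y t"
proof -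
  define a where "a = sqrt x"
  define b where "b = sqrt y"
  have a1: "a \<ge> 1" and b1: "b \<ge> 1" using assms by (auto simp: a_def b_def)
  have xa: "x = a^2" and yb: "y = b^2" using assms by (auto simp: a_def b_def)
  have sq: "sqrt (x*y) = a*b" by (simp add: a_def b_def real_sqrt_mult)
  have env: "envelope x y = (1+a*b)^2/(a+b)^2"
    unfolding envelope_def sq by (simp add: a_def b_def power_divide)
  have p1: "(1+y*t)*(1+x*t) > 0" using assms by (intro mult_pos_pos add_pos_pos) auto
  have p2: "(a+b)^2 > 0" using a1 b1 by simp
  have "gfun x y t = (1+t)*(1+a^2*b^2*t)/((1+b^2*t)*(1+a^2*t))"
    unfolding gfun_def xa yb by (simp add: power_mult_distrib)
  also have "\<dots> \<le> (1+a*b)^2/(a+b)^2"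
    using key_poly[OF a1 b1 assms(3)] p1 p2 xa yb
    by (simp add: divide_simps mult.commute mult.left_commute)
  finally show "gfun x y t \<le> envelope x y" using env by simp
  have "(1+y*t)*(1+x*t) \<le> (1+t)*(1+x*y*t)"
  proof -
    have "(1+t)*(1+x*y*t) - (1+y*t)*(1+x*t) = t*((x-1)*(y-1))"
      by (simp add: algebra_simps)
    moreover have "t*((x-1)*(y-1)) \<ge> 0" using assms by simp
    ultimately show ?thesis by linarith
  qed
  then show "1 \<le> gfun x y t" unfolding gfun_def using p1 by simp
qed

lemma main_f:
  fixes x y t :: real
  assumes "x > 0" "y > 0" "t > 0"
  shows "max (gfun x y t) (1 / gfun x y t) \<le> envelope (max x (1/x)) (max y (1/y))"
proof -
  have pos: "gfun x y t > 0" using assms unfolding gfun_def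
    by (intro divide_pos_pos mult_pos_pos add_pos_pos) auto
  show ?thesis
  proof (cases "x \<ge> 1")
    case True
    note x1 = True
    show ?thesis
    proof (cases "y \<ge> 1")
      case True
      have mx: "max x (1/x) = x" proof -
        have "1/x \<le> 1" using x1 by simp
        then show ?thesis using x1 by (intro max_absorb1) linarith
      qed
      have my: "max y (1/y) = y"
      proof -
        have "1/y \<le> 1" using True by simp
        then show ?thesis using True by (intro max_absorb1) linarith
      qed
      have "gfun x y t \<ge> 1" using key(2)[OF x1 True assms(3)] .
      then have "1 / gfun x y t \<le> gfun x y t" using pos by (smt (verit) divide_le_eq_1_pos)
      then show ?thesis using key(1)[OF x1 True assms(3)] mx my by simp
    next
      case False
      have mx: "max x (1/x) = x" proof -
        have "1/x \<le> 1" using x1 by simp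
        then show ?thesis using x1 by (intro max_absorb1) linarith
      qed
      have my: "max y (1/y) = 1/y"
    proof -
      have "1 \<le> 1/y" using False assms by (simp add: divide_simps)
      then show ?thesis using False by (intro max_absorb2) linarith
    qed
      have Y: "1/y \<ge> 1" using False assms by (simp add: divide_simps)
      have s: "t*y > 0" using assms by simp
      have eq: "1 / gfun x y t = gfun x (1/y) (t*y)"
        using assms unfolding gfun_def by (simp add: field_simps)
      have "gfun x (1/y) (t*y) \<ge> 1" using key(2)[OF x1 Y s] .
      then have "1 \<le> 1 / gfun x y t" using eq by simp
      then have "gfun x y t \<le> 1" using pos le_divide_eq_1_pos by blast
      then have "gfun x y t \<le> 1 / gfun x y t" using \<open>1 \<le> 1 / gfun x y t\<close> by linarith
      then show ?thesis using key(1)[OF x1 Y s] mx my eq by simp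
    qed
  next
    case False
    have X: "1/x \<ge> 1" using False assms by (simp add: divide_simps)
    have mx: "max x (1/x) = 1/x"
    proof -
      have "1 \<le> 1/x" using False assms by (simp add: divide_simps)
      then show ?thesis using False by (intro max_absorb2) linarith
    qed
    show ?thesis
    proof (cases "y \<ge> 1")
      case True
      have my: "max y (1/y) = y"
      proof -
        have "1/y \<le> 1" using True by simp
        then show ?thesis using True by (intro max_absorb1) linarith
      qed
      have s: "t*x > 0" using assms by simp
      have eq: "1 / gfun x y t = gfun (1/x) y (t*x)"
        using assms unfolding gfun_def by (simp add: field_simps)
      have "gfun (1/x) y (t*x) \<ge> 1" using key(2)[OF X True s] .
      then have "1 \<le> 1 / gfun x y t" using eq by simp
      then have "gfun x y t \<le> 1" using pos le_divide_eq_1_pos by blast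
      then have "gfun x y t \<le> 1 / gfun x y t" using \<open>1 \<le> 1 / gfun x y t\<close> by linarith
      then show ?thesis using key(1)[OF X True s] mx my eq by simp
    next
      case False
      have my: "max y (1/y) = 1/y"
    proof -
      have "1 \<le> 1/y" using False assms by (simp add: divide_simps)
      then show ?thesis using False by (intro max_absorb2) linarith
    qed
      have Y: "1/y \<ge> 1" using False assms by (simp add: divide_simps)
      have s: "t*x*y > 0" using assms by simp
      have eq: "gfun x y t = gfun (1/x) (1/y) (t*x*y)"
        using assms unfolding gfun_def by (simp add: field_simps)
      have "gfun x y t \<ge> 1" using key(2)[OF X Y s] eq by simp
      then have "1 / gfun x y t \<le> gfun x y t" using pos by (smt (verit) divide_le_eq_1_pos)
      then show ?thesis using key(1)[OF X Y s] mx my eq by simp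
    qed
  qed
qed

theorem mainTheorem1:
  fixes A B :: "real^2^2"
  assumes "pos_matrix A" and "pos_matrix B"
  shows "distortion (A ** B) \<le> envelope (distortion A) (distortion B)"
proof -
  define a where "a = A$1$1"
  define b where "b = A$1$2"
  define c where "c = A$2$1"
  define d where "d = A$2$2"
  define pp where "pp = B$1$1"
  define qq where "qq = B$1$2"
  define rr where "rr = B$2$1"
  define ss where "ss = B$2$2"
  have pa: "a > 0" "b > 0" "c > 0" "d > 0"
    using assms(1) unfolding pos_matrix_def a_def b_def c_def d_def by auto
  have pb: "pp > 0" "qq > 0" "rr > 0" "ss > 0"
    using assms(2) unfolding pos_matrix_def pp_def qq_def rr_def ss_def by auto
  define x where "x = a*d/(b*c)"
  define y where "y = pp * ss/(qq * rr)"
  define t where "t = b*rr/(a*pp)"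
  have fA: "oriented_distortion A = x"
    unfolding oriented_distortion_def x_def a_def b_def c_def d_def by simp
  have fB: "oriented_distortion B = y"
    unfolding oriented_distortion_def y_def pp_def qq_def rr_def ss_def by simp
  have fAB: "oriented_distortion (A ** B) = (a*pp+b*rr)*(c*qq+d * ss)/((a*qq+b * ss)*(c*pp+d*rr))"
    unfolding oriented_distortion_def matrix_matrix_mult_def
    by (simp add: sum_2 a_def b_def c_def d_def pp_def qq_def rr_def ss_def)
  have "oriented_distortion (A ** B) = gfun x y t"
  proof -
    have e1: "1+t = (a*pp+b*rr)/(a*pp)" using pa pb unfolding t_def by (simp add: field_simps)
    have e2: "1+x*y*t = (c*qq+d * ss)/(c*qq)" using pa pb unfolding x_def y_def t_def by (simp add: field_simps)
    have e3: "1+y*t = (a*qq+b * ss)/(a*qq)" using pa pb unfolding y_def t_def by (simp add: field_simps)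
    have e4: "1+x*t = (c*pp+d*rr)/(c*pp)" using pa pb unfolding x_def t_def by (simp add: field_simps)
    have k: "a*pp*(c*qq) = a*qq*(c*pp)" by (simp add: ac_simps)
    have k0: "a*pp*(c*qq) \<noteq> 0" using pa pb by simp
    have gen: "\<And>u v kk::real. kk \<noteq> 0 \<Longrightarrow> (u/kk)/(v/kk) = u/v" by simp
    show ?thesis unfolding fAB gfun_def e1 e2 e3 e4 times_divide_times_eq k[symmetric]
      by (rule gen[OF k0, symmetric])
  qed
  moreover have "x > 0" "y > 0" "t > 0" using pa pb by (auto simp: x_def y_def t_def)
  ultimately show ?thesis
    using main_f[of x y t] fA fB unfolding distortion_def by simp
qed

end
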